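(* The cellular automaton $F$ on the free group $G$ with generators $a,b$ and alphabet $A=\{0,1,\iota,\beta\}$ described in the context has no equicontinuity point.
   Context: $G$ is the free group on $\{a,b\}$ with generating set $E=\{a,a^{-1},b,b^{-1}\}$, word norm $\|g\|$, and Cantor metric $d(x,y)=2^{-k}$, $k=\min\{\|g\|:x_g\neq y_g\}$, on $A^G$, with closed balls $B$. In a configuration $c\in A^G$, a position $g$ is free if $c_g\in\{0,1\}$ and $|\{g'\in gE: c_{g'}\in\{0,1\}\}|\geq 2$. A position $g$ is blocked in $c$ if either ($c_g=\iota$ and $c_{g'}\in\{\iota,\beta\}$ for all $g'\in gE$), or ($c_g=\beta$ and exactly one $g'\in gE$ has $c_{g'}=\iota$ and all other elements of $gE$ are free in $c$). The map $F:A^G\to A^G$ is defined by: $F(c)_g=c_g+\sum_{g'\in gE,\,c_{g'}\in\{0,1\}}c_{g'}\bmod 2$ if $c_g\in\{0,1\}$; $F(c)_g=c_g$ if $g$ is blocked in $c$; $F(c)_g=0$ otherwise. (It is a cellular automaton of radius 2.) $x$ is an equicontinuity point of $F$ if $\forall\epsilon>0\,\exists\delta>0\,\forall t\in\mathbb{N}$, $F^t(B(x,\delta))\subseteq B(F^t(x),\epsilon)$. *)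

theory Defs
  imports Complex_Main
begin

datatype gen = GA | GAi | GB | GBi

fun ginv :: "gen \<Rightarrow> gen" where
  "ginv GA = GAi" | "ginv GAi = GA" | "ginv GB = GBi" | "ginv GBi = GB"

fun reduced :: "gen list \<Rightarrow> bool" where
  "reduced (x # y # ys) = (y \<noteq> ginv x \<and> reduced (y # ys))"
| "reduced _ = True"

typedef fg = "{w :: gen list. reduced w}"
  by (rule exI[of _ "[]"]) simp

definition rstep :: "gen list \<Rightarrow> gen \<Rightarrow> gen list" where
  "rstep w e = (if w \<noteq> [] \<and> last w = ginv e then butlast w else w @ [e])"

definition gmul :: "fg \<Rightarrow> gen \<Rightarrow> fg" where
  "gmul g e = Abs_fg (rstep (Rep_fg g) e)"

definition nbhd :: "fg \<Rightarrow> fg set" where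
  "nbhd g = gmul g ` UNIV"

definition wnorm :: "fg \<Rightarrow> nat" where
  "wnorm g = length (Rep_fg g)"

datatype sym = S0 | S1 | Iota | Beta

fun sval :: "sym \<Rightarrow> nat" where
  "sval S1 = 1" | "sval _ = 0"

definition isbit :: "sym \<Rightarrow> bool" where
  "isbit s \<longleftrightarrow> s = S0 \<or> s = S1"

type_synonym config = "fg \<Rightarrow> sym"

definition free_pos :: "config \<Rightarrow> fg \<Rightarrow> bool" where
  "free_pos c g \<longleftrightarrow> isbit (c g) \<and> card {g' \<in> nbhd g. isbit (c g')} \<ge> 2"

definition blocked :: "config \<Rightarrow> fg \<Rightarrow> bool" where
  "blocked c g \<longleftrightarrow>
     (c g = Iota \<and> (\<forall>g'\<in>nbhd g. c g' = Iota \<or> c g' = Beta))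
   \<or> (c g = Beta \<and> (\<exists>!g'. g' \<in> nbhd g \<and> c g' = Iota)
        \<and> (\<forall>g'\<in>nbhd g. c g' \<noteq> Iota \<longrightarrow> free_pos c g'))"

definition bit_of :: "nat \<Rightarrow> sym" where
  "bit_of n = (if n mod 2 = 0 then S0 else S1)"

definition CA :: "config \<Rightarrow> config" where
  "CA c g =
    (if isbit (c g) then bit_of (sval (c g) + (\<Sum>g'\<in>{g' \<in> nbhd g. isbit (c g')}. sval (c g')))
     else if blocked c g then c g
     else S0)"

definition cdist :: "config \<Rightarrow> config \<Rightarrow> real" where
  "cdist x y = (if x = y then 0
     else (1/2) ^ (LEAST k. \<exists>g. wnorm g = k \<and> x g \<noteq> y g))"

definition equicont_point :: "(config \<Rightarrow> config) \<Rightarrow> config \<Rightarrow> bool" where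
  "equicont_point F x \<longleftrightarrow>
     (\<forall>\<epsilon>>0. \<exists>\<delta>>0. \<forall>t::nat. \<forall>y. cdist x y \<le> \<delta> \<longrightarrow> cdist ((F ^^ t) x) ((F ^^ t) y) \<le> \<epsilon>)"

end

theory Submission
  imports Defs
begin

lemma ginv_ginv[simp]: "ginv (ginv x) = x" by (cases x) auto
lemma ginv_neq[simp]: "ginv x \<noteq> x" by (cases x) auto

lemma reduced_snoc: "reduced (w @ [e]) \<longleftrightarrow> reduced w \<and> (w = [] \<or> e \<noteq> ginv (last w))"
  by (induction w rule: reduced.induct) auto

lemma reduced_appendD: "reduced (xs @ ys) \<Longrightarrow> reduced xs"
  by (induction xs rule: reduced.induct) (auto simp: Cons_eq_append_conv)

lemma reduced_take: "reduced w \<Longrightarrow> reduced (take i w)"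
  by (metis append_take_drop_id reduced_appendD)

lemma reduced_rstep: "reduced w \<Longrightarrow> reduced (rstep w e)"
  unfolding rstep_def
  by (auto simp: butlast_conv_take reduced_take reduced_snoc)

lemma Rep_red[simp]: "reduced (Rep_fg g)" using Rep_fg by auto

lemma Rep_Abs[simp]: "reduced w \<Longrightarrow> Rep_fg (Abs_fg w) = w"
  by (simp add: Abs_fg_inverse)

lemma rep_gmul: "Rep_fg (gmul g e) = rstep (Rep_fg g) e"
  unfolding gmul_def by (simp add: reduced_rstep)

lemma gmul_child: "Rep_fg g = [] \<or> last (Rep_fg g) \<noteq> ginv e \<Longrightarrow> Rep_fg (gmul g e) = Rep_fg g @ [e]"
  by (auto simp: rep_gmul rstep_def)

lemma gmul_parent: "Rep_fg g \<noteq> [] \<Longrightarrow> last (Rep_fg g) = ginv e \<Longrightarrow> gmul g e = Abs_fg (butlast (Rep_fg g))"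
  by (auto simp: gmul_def rstep_def)

lemma gmul_back: "Rep_fg g = [] \<or> last (Rep_fg g) \<noteq> ginv e \<Longrightarrow> gmul (gmul g e) (ginv e) = g"
  unfolding gmul_def[of "gmul g e"] using gmul_child[of g e]
  by (simp add: rstep_def Rep_fg_inverse)

lemma in_nbhd: "v \<in> nbhd g \<longleftrightarrow> (\<exists>e. v = gmul g e)"
  by (auto simp: nbhd_def)

lemma UNIV_gen: "(UNIV :: gen set) = {GA, GAi, GB, GBi}"
  by (auto intro: gen.exhaust)

lemma finite_nbhd[simp]: "finite (nbhd g)"
  by (simp add: nbhd_def UNIV_gen)

lemma wnorm_nbhd: "v \<in> nbhd g \<Longrightarrow> wnorm v \<le> wnorm g + 1"
  by (auto simp: in_nbhd wnorm_def rep_gmul rstep_def)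

lemma child_exists: "\<exists>e. Rep_fg g = [] \<or> last (Rep_fg g) \<noteq> ginv e"
  by (rule exI[of _ "last (Rep_fg g)"]) (metis ginv_ginv ginv_neq)

lemma two_nbrs: "gmul g GA \<noteq> gmul g GB"
proof
  assume "gmul g GA = gmul g GB"
  hence "rstep (Rep_fg g) GA = rstep (Rep_fg g) GB" by (metis rep_gmul)
  thus False unfolding rstep_def
    by (auto split: if_splits dest: arg_cong[of _ _ length])
qed

lemma isbit_simps[simp]: "isbit S0" "isbit S1" "\<not> isbit Iota" "\<not> isbit Beta"
  by (auto simp: isbit_def)

lemma isbit_bit_of[simp]: "isbit (bit_of n)" by (simp add: bit_of_def)

lemma CA_bit: "isbit (c g) \<Longrightarrow> isbit (CA c g)"
  by (simp add: CA_def)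

definition samepat :: "config \<Rightarrow> config \<Rightarrow> bool" where
  "samepat c c' \<longleftrightarrow> (\<forall>g. isbit (c g) = isbit (c' g) \<and> (\<not> isbit (c g) \<longrightarrow> c g = c' g))"

lemma samepat_Iota: "samepat c c' \<Longrightarrow> (c v = Iota) = (c' v = Iota)"
  unfolding samepat_def by (metis isbit_simps(3))
lemma samepat_Beta: "samepat c c' \<Longrightarrow> (c v = Beta) = (c' v = Beta)"
  unfolding samepat_def by (metis isbit_simps(4))
lemma samepat_bit: "samepat c c' \<Longrightarrow> isbit (c v) = isbit (c' v)"
  unfolding samepat_def by metis

lemma blocked_pat: assumes "samepat c c'" shows "blocked c g = blocked c' g"
proof -
  have f: "free_pos c v = free_pos c' v" for v
    unfolding free_pos_def using samepat_bit[OF assms] by simp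
  show ?thesis unfolding blocked_def f
    using samepat_Iota[OF assms] samepat_Beta[OF assms] by simp
qed

lemma samepat_CA: assumes "samepat c c'" shows "samepat (CA c) (CA c')"
  unfolding samepat_def
proof
  fix g
  show "isbit (CA c g) = isbit (CA c' g) \<and> (\<not> isbit (CA c g) \<longrightarrow> CA c g = CA c' g)"
  proof (cases "isbit (c g)")
    case True
    then show ?thesis using samepat_bit[OF assms] CA_bit by metis
  next
    case False
    then have "c g = c' g" "\<not> isbit (c' g)" using assms unfolding samepat_def by metis+
    then show ?thesis using False blocked_pat[OF assms, of g] unfolding CA_def by auto
  qed
qed

lemma samepat_iter: "samepat c c' \<Longrightarrow> samepat ((CA ^^ t) c) ((CA ^^ t) c')"
  by (induction t) (auto intro: samepat_CA)

lemma CA_cong: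
  assumes A1: "\<forall>v\<in>nbhd g. \<forall>w\<in>nbhd v. isbit (c w) = isbit (c' w)"
      and A2: "\<forall>v\<in>insert g (nbhd g). c v = c' v"
  shows "CA c g = CA c' g"
proof -
  have f: "free_pos c v = free_pos c' v" if "v \<in> nbhd g" for v
  proof -
    have "{g' \<in> nbhd v. isbit (c g')} = {g' \<in> nbhd v. isbit (c' g')}" using A1 that by auto
    then show ?thesis unfolding free_pos_def using A2 that by auto
  qed
  have b: "blocked c g = blocked c' g"
  proof -
    have e0: "c g = c' g" using A2 by simp
    have eqs: "\<And>v. v \<in> nbhd g \<Longrightarrow> c v = c' v" using A2 by simp
    have ex: "(\<exists>!g'. g' \<in> nbhd g \<and> c g' = Iota) = (\<exists>!g'. g' \<in> nbhd g \<and> c' g' = Iota)"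
      using eqs by metis
    show ?thesis unfolding blocked_def e0 ex using eqs f by (simp cong: conj_cong)
  qed
  have S: "{g' \<in> nbhd g. isbit (c g')} = {g' \<in> nbhd g. isbit (c' g')}" using A2 by auto
  have s: "(\<Sum>g'\<in>{g' \<in> nbhd g. isbit (c g')}. sval (c g')) = (\<Sum>g'\<in>{g' \<in> nbhd g. isbit (c' g')}. sval (c' g'))"
    unfolding S using A2 by (intro sum.cong) auto
  show ?thesis unfolding CA_def s b using A2 by simp
qed

lemma CA_local:
  assumes "\<forall>v. wnorm v \<le> wnorm g + 2 \<longrightarrow> c v = c' v"
  shows "CA c g = CA c' g"
proof (rule CA_cong)
  show "\<forall>v\<in>nbhd g. \<forall>w\<in>nbhd v. isbit (c w) = isbit (c' w)"
    proof (intro ballI)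
    fix v w assume "v \<in> nbhd g" "w \<in> nbhd v"
    then have "wnorm w \<le> wnorm g + 2" using wnorm_nbhd[of w v] wnorm_nbhd[of v g] by linarith
    then show "isbit (c w) = isbit (c' w)" using assms by simp
  qed
  show "\<forall>v\<in>insert g (nbhd g). c v = c' v" using assms wnorm_nbhd by fastforce
qed

lemma bit_persist: "isbit ((CA ^^ t) c g) \<Longrightarrow> t \<le> t' \<Longrightarrow> isbit ((CA ^^ t') c g)"
proof (induction t' )
  case 0 then show ?case by simp
next
  case (Suc t') then show ?case using CA_bit by (cases "t = Suc t'") auto
qed

lemma sval_bit: "isbit s \<Longrightarrow> sval s \<le> 1" by (cases s) auto

lemma frontier:
  assumes sp: "samepat c c'" and gb: "isbit (c g)" and eq: "c g = c' g"
    and vs: "vs \<in> nbhd g" and d: "c vs \<noteq> c' vs"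
    and oth: "\<forall>v\<in>nbhd g. v \<noteq> vs \<longrightarrow> c v = c' v"
  shows "CA c g \<noteq> CA c' g"
proof -
  have gb': "isbit (c' g)" using gb eq by simp
  have vb: "isbit (c vs)" "isbit (c' vs)" using d sp unfolding samepat_def by metis+
  define S where "S = {g' \<in> nbhd g. isbit (c g')}"
  have S': "{g' \<in> nbhd g. isbit (c' g')} = S" unfolding S_def using samepat_bit[OF sp] by auto
  have fin: "finite S" unfolding S_def by simp
  have vsS: "vs \<in> S" unfolding S_def using vs vb by auto
  have r: "(\<Sum>v\<in>S - {vs}. sval (c v)) = (\<Sum>v\<in>S - {vs}. sval (c' v))"
    using oth unfolding S_def by (intro sum.cong) auto
  have s1: "(\<Sum>v\<in>S. sval (c v)) = sval (c vs) + (\<Sum>v\<in>S - {vs}. sval (c v))"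
    using fin vsS by (simp add: sum.remove)
  have s2: "(\<Sum>v\<in>S. sval (c' v)) = sval (c' vs) + (\<Sum>v\<in>S - {vs}. sval (c' v))"
    using fin vsS by (simp add: sum.remove)
  have sv: "(sval (c vs) = 0 \<and> sval (c' vs) = 1) \<or> (sval (c vs) = 1 \<and> sval (c' vs) = 0)"
    using vb d by (cases "c vs"; cases "c' vs") (auto simp: isbit_def)
  have "bit_of (sval (c g) + (\<Sum>v\<in>S. sval (c v))) \<noteq> bit_of (sval (c' g) + (\<Sum>v\<in>S. sval (c' v)))"
  proof -
    have p: "(a + (x + r)) mod 2 \<noteq> (a + (y + r)) mod 2" if "(x = 0 \<and> y = 1) \<or> (x = 1 \<and> y = (0::nat))" for a r x y :: nat
      using that by presburger
    have be: "bit_of a = bit_of b \<longleftrightarrow> a mod 2 = b mod 2" for a b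
      unfolding bit_of_def by (auto split: if_splits)
    show ?thesis unfolding s1 s2 r eq be by (rule p[OF sv])
  qed
  then show ?thesis unfolding CA_def using gb gb' S' S_def by simp
qed

fun cpl :: "gen list \<Rightarrow> gen list \<Rightarrow> nat" where
  "cpl (x#xs) (y#ys) = (if x = y then Suc (cpl xs ys) else 0)"
| "cpl _ _ = 0"

definition ldist :: "gen list \<Rightarrow> gen list \<Rightarrow> nat" where
  "ldist u H = (length u - cpl u H) + (length H - cpl u H)"

lemma cpl_le1: "cpl u H \<le> length u" by (induction u H rule: cpl.induct) auto
lemma cpl_le2: "cpl u H \<le> length H" by (induction u H rule: cpl.induct) auto

lemma cpl_snoc: "cpl u H \<le> cpl (u@[e]) H \<and> cpl (u@[e]) H \<le> Suc (cpl u H)"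
proof (induction u arbitrary: H)
  case Nil then show ?case by (cases H) auto
next
  case (Cons a u) then show ?case by (cases H) auto
qed

lemma cpl_take: "cpl (take i u) H = min i (cpl u H)"
proof (induction u arbitrary: i H)
  case Nil then show ?case by simp
next
  case (Cons a u) then show ?case by (cases H; cases i) auto
qed

lemma cpl_self: "cpl H H = length H" by (induction H) auto

lemma cpl_take_self: "cpl (take i H) H = min i (length H)"
  by (simp add: cpl_take cpl_self)

lemma cpl_take_snoc: "i < length H \<Longrightarrow> e \<noteq> H ! i \<Longrightarrow> cpl (take i H @ [e]) H = i"
proof (induction H arbitrary: i)
  case Nil then show ?case by simp
next
  case (Cons a H) then show ?case by (cases i) auto
qed

lemma ldist_take: "i \<le> length H \<Longrightarrow> ldist (take i H) H = length H - i"
  unfolding ldist_def cpl_take_self by simp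

lemma ldist_self: "ldist H H = 0" unfolding ldist_def cpl_self by simp

lemma ldist_nbhd: assumes "v \<in> nbhd g" shows "ldist (Rep_fg g) H \<le> ldist (Rep_fg v) H + 1"
proof -
  obtain e where v: "v = gmul g e" using assms in_nbhd by auto
  define w where "w = Rep_fg g"
  have c1: "cpl w H \<le> length w" "cpl w H \<le> length H" using cpl_le1 cpl_le2 by auto
  show ?thesis
  proof (cases "w \<noteq> [] \<and> last w = ginv e")
    case True
    then have r: "Rep_fg v = take (length w - 1) w" unfolding v rep_gmul w_def[symmetric] rstep_def
      by (simp add: butlast_conv_take)
    show ?thesis unfolding r w_def[symmetric] ldist_def cpl_take using c1 by auto
  next
    case False
    then have r: "Rep_fg v = w @ [e]" unfolding v rep_gmul w_def[symmetric] rstep_def by auto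
    have "cpl w H \<le> cpl (w@[e]) H" "cpl (w@[e]) H \<le> Suc (cpl w H)" using cpl_snoc by auto
    moreover have "cpl (w@[e]) H \<le> length H" "cpl (w@[e]) H \<le> length (w@[e])" using cpl_le1 cpl_le2 by blast+
    ultimately show ?thesis unfolding r w_def[symmetric] ldist_def using c1 by auto
  qed
qed

lemma ldist_front:
  assumes "reduced H" "i < length H" "Rep_fg g = take i H" "v \<in> nbhd g"
  shows "v = Abs_fg (take (Suc i) H) \<or> length H - i \<le> ldist (Rep_fg v) H"
proof -
  obtain e where v: "v = gmul g e" using assms in_nbhd by auto
  define w where "w = Rep_fg g"
  show ?thesis
  proof (cases "w \<noteq> [] \<and> last w = ginv e")
    case True
    then have r: "Rep_fg v = take (i - 1) H" unfolding v rep_gmul w_def[symmetric] rstep_def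
      using assms(2,3) w_def by (simp add: butlast_conv_take min_def)
    then show ?thesis using assms(2) by (simp add: ldist_take diff_le_mono2)
  next
    case False
    then have r: "Rep_fg v = take i H @ [e]" unfolding v rep_gmul w_def[symmetric] rstep_def
      using assms(3) w_def by auto
    show ?thesis
    proof (cases "e = H ! i")
      case True
      then have "Rep_fg v = take (Suc i) H" using r assms(2) by (simp add: take_Suc_conv_app_nth)
      then show ?thesis by (metis Rep_fg_inverse)
    next
      case False
      then show ?thesis unfolding ldist_def r using cpl_take_snoc[OF assms(2) False] assms(2) by simp
    qed
  qed
qed

lemma take_Suc_gmul:
  assumes "reduced H" "i < length H"
  shows "Abs_fg (take (Suc i) H) = gmul (Abs_fg (take i H)) (H ! i)"
proof -
  have red: "reduced (take i H @ [H ! i])" using assms reduced_take[of H "Suc i"]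
    by (simp add: take_Suc_conv_app_nth)
  then have rt: "reduced (take i H)" using reduced_snoc by blast
  have "take i H = [] \<or> last (take i H) \<noteq> ginv (H ! i)"
    using red reduced_snoc by (metis ginv_ginv)
  then have "Rep_fg (gmul (Abs_fg (take i H)) (H ! i)) = take i H @ [H ! i]"
    using gmul_child rt by simp
  then show ?thesis using assms(2) by (metis Rep_fg_inverse take_Suc_conv_app_nth)
qed

lemma child_bit:
  assumes gb: "isbit (c g)"
  shows "\<exists>e. (Rep_fg g = [] \<or> last (Rep_fg g) \<noteq> ginv e) \<and> isbit (CA c (gmul g e))"
proof (cases "\<exists>e. (Rep_fg g = [] \<or> last (Rep_fg g) \<noteq> ginv e) \<and> isbit (c (gmul g e))")
  case True
  then show ?thesis using CA_bit by blast
next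
  case False
  note nochild = False
  obtain e0 where e0: "Rep_fg g = [] \<or> last (Rep_fg g) \<noteq> ginv e0" using child_exists by blast
  define v0 where "v0 = gmul g e0"
  have nb0: "\<not> isbit (c v0)" using nochild e0 v0_def by blast
  have gin: "g \<in> nbhd v0" unfolding v0_def in_nbhd using gmul_back[OF e0] by metis
  have sub: "{g' \<in> nbhd g. isbit (c g')} \<subseteq> {Abs_fg (butlast (Rep_fg g))}"
  proof
    fix v assume "v \<in> {g' \<in> nbhd g. isbit (c g')}"
    then obtain e where v: "v = gmul g e" and vb: "isbit (c v)" using in_nbhd by auto
    have "Rep_fg g \<noteq> [] \<and> last (Rep_fg g) = ginv e" using nochild v vb by blast
    then show "v \<in> {Abs_fg (butlast (Rep_fg g))}" using gmul_parent v by auto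
  qed
  have "card {g' \<in> nbhd g. isbit (c g')} \<le> 1"
    using card_mono[OF _ sub] by simp
  then have nf: "\<not> free_pos c g" unfolding free_pos_def by simp
  have "\<not> blocked c v0"
    unfolding blocked_def using gin gb nf
    by (metis isbit_simps(3) isbit_simps(4))
  then have "isbit (CA c v0)" using nb0 unfolding CA_def by simp
  then show ?thesis using e0 v0_def by blast
qed

lemma ray:
  assumes "isbit ((CA ^^ T) y g0)"
  shows "\<exists>s. length s = J \<and> reduced (Rep_fg g0 @ s) \<and>
     (\<forall>j\<le>J. isbit ((CA ^^ (T + j)) y (Abs_fg (Rep_fg g0 @ take j s))))"
proof (induction J)
  case 0
  then show ?case using assms by (auto simp: Rep_fg_inverse)
next
  case (Suc J)
  then obtain s where s: "length s = J" "reduced (Rep_fg g0 @ s)"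
    "\<forall>j\<le>J. isbit ((CA ^^ (T + j)) y (Abs_fg (Rep_fg g0 @ take j s)))" by blast
  define w where "w = Abs_fg (Rep_fg g0 @ s)"
  have rw: "Rep_fg w = Rep_fg g0 @ s" using s(2) w_def by simp
  have "isbit ((CA ^^ (T + J)) y w)" using s(3) s(1) w_def by auto
  then obtain e where e: "Rep_fg w = [] \<or> last (Rep_fg w) \<noteq> ginv e"
    and eb: "isbit (CA ((CA ^^ (T + J)) y) (gmul w e))" using child_bit by blast
  have rc: "Rep_fg (gmul w e) = Rep_fg g0 @ s @ [e]" using gmul_child[OF e] rw by simp
  have red: "reduced (Rep_fg g0 @ s @ [e])" using rc by (metis Rep_red)
  have "gmul w e = Abs_fg (Rep_fg g0 @ s @ [e])" using rc by (metis Rep_fg_inverse)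
  then have eb': "isbit ((CA ^^ (T + Suc J)) y (Abs_fg (Rep_fg g0 @ take (Suc J) (s @ [e]))))"
    using eb s(1) by simp
  show ?case
  proof (intro exI conjI allI impI)
    show "length (s @ [e]) = Suc J" using s(1) by simp
    show "reduced (Rep_fg g0 @ s @ [e])" by (rule red)
    fix j assume "j \<le> Suc J"
    then show "isbit ((CA ^^ (T + j)) y (Abs_fg (Rep_fg g0 @ take j (s @ [e]))))"
      using eb' s(1) s(3) by (cases "j = Suc J") auto
  qed
qed

lemma CA_Iota: assumes "\<forall>g. x g = Iota" shows "CA x = x"
proof
  fix g show "CA x g = x g" using assms unfolding CA_def blocked_def by simp
qed

lemma iter_Iota: assumes "\<forall>g. x g = Iota" shows "(CA ^^ t) x = x"
  by (induction t) (auto simp: CA_Iota[OF assms])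

lemma erosion:
  "(CA ^^ t) (\<lambda>g. if wnorm g \<le> n then Iota else S0) = (\<lambda>g. if wnorm g + t \<le> n then Iota else S0)"
proof (induction t)
  case 0 then show ?case by simp
next
  case (Suc t)
  define c where "c = (\<lambda>g. if wnorm g + t \<le> n then Iota else S0)"
  have sv0: "sval (c v) = 0" for v unfolding c_def by simp
  have "CA c g = (if wnorm g + Suc t \<le> n then Iota else S0)" for g
  proof (cases "wnorm g + Suc t \<le> n")
    case True
    then have "\<forall>v\<in>nbhd g. c v = Iota" unfolding c_def using wnorm_nbhd by fastforce
    moreover have "c g = Iota" using True c_def by simp
    ultimately show ?thesis using True unfolding CA_def blocked_def by simp
  next
    case False
    show ?thesis
    proof (cases "wnorm g + t \<le> n")
      case True
      then have cg: "c g = Iota" using c_def by simp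
      obtain e where e: "Rep_fg g = [] \<or> last (Rep_fg g) \<noteq> ginv e" using child_exists by blast
      have "wnorm (gmul g e) = wnorm g + 1" using gmul_child[OF e] by (simp add: wnorm_def)
      then have "c (gmul g e) = S0" using False c_def by simp
      moreover have "gmul g e \<in> nbhd g" unfolding in_nbhd by blast
      ultimately have "\<not> blocked c g" unfolding blocked_def using cg by force
      then show ?thesis using cg False unfolding CA_def by simp
    next
      case False2: False
      then have "c g = S0" using c_def by simp
      then show ?thesis using False False2 unfolding CA_def sv0 by (simp add: bit_of_def)
    qed
  qed
  then show ?case using Suc by (auto simp: c_def)
qed

lemma cdist_le:
  assumes "\<forall>g. wnorm g \<le> n \<longrightarrow> x g = y g"
  shows "cdist x y \<le> (1/2) ^ Suc n"
proof (cases "x = y")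
  case True then show ?thesis by (simp add: cdist_def)
next
  case False
  then obtain g where "x g \<noteq> y g" by blast
  then have ex: "\<exists>k g. wnorm g = k \<and> x g \<noteq> y g" by blast
  define k where "k = (LEAST k. \<exists>g. wnorm g = k \<and> x g \<noteq> y g)"
  obtain g' where "wnorm g' = k" "x g' \<noteq> y g'" using LeastI_ex[OF ex] k_def by blast
  then have "Suc n \<le> k" using assms by (meson not_less_eq_eq)
  then have "((1::real)/2) ^ k \<le> (1/2) ^ Suc n" by (intro power_decreasing) auto
  then show ?thesis using False by (simp add: cdist_def k_def)
qed

lemma cdist_ge:
  assumes "x g \<noteq> y g"
  shows "(1/2) ^ wnorm g \<le> cdist x y"
proof -
  have ne: "x \<noteq> y" using assms by auto
  have "(LEAST k. \<exists>g. wnorm g = k \<and> x g \<noteq> y g) \<le> wnorm g"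
    using assms by (intro Least_le) auto
  then have "((1::real)/2) ^ wnorm g \<le> (1/2) ^ (LEAST k. \<exists>g. wnorm g = k \<and> x g \<noteq> y g)"
    by (intro power_decreasing) auto
  then show ?thesis using ne by (simp add: cdist_def)
qed

lemma all_Iota:
  assumes "\<forall>g. \<not> isbit (CA x g)"
  shows "\<forall>g. x g = Iota"
proof
  fix g
  have nb: "\<not> isbit (x v)" for v using assms CA_bit by blast
  have bl: "blocked x g" using assms[rule_format, of g] nb[of g] unfolding CA_def by (auto split: if_splits)
  show "x g = Iota"
  proof (rule ccontr)
    assume ni: "x g \<noteq> Iota"
    then have "x g = Beta" using nb[of g] by (cases "x g") auto
    then have u: "\<exists>!g'. g' \<in> nbhd g \<and> x g' = Iota" and f: "\<forall>g'\<in>nbhd g. x g' \<noteq> Iota \<longrightarrow> free_pos x g'"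
      using bl ni unfolding blocked_def by auto
    have allI': "\<forall>g'\<in>nbhd g. x g' = Iota" using f nb unfolding free_pos_def by blast
    have "gmul g GA \<in> nbhd g" "gmul g GB \<in> nbhd g" unfolding in_nbhd by blast+
    then show False using u allI' two_nbrs by metis
  qed
qed

lemma half_pow: "0 < (\<delta>::real) \<Longrightarrow> \<exists>n. ((1::real)/2) ^ n < \<delta>"
  by (intro real_arch_pow_inv) auto

lemma case_iota:
  assumes xI: "\<forall>g. x g = Iota"
  shows "\<not> equicont_point CA x"
proof
  assume "equicont_point CA x"
  then obtain \<delta> where dp: "\<delta> > 0" and H: "\<forall>t y. cdist x y \<le> \<delta> \<longrightarrow> cdist ((CA ^^ t) x) ((CA ^^ t) y) \<le> 1/2"
    unfolding equicont_point_def by (meson half_gt_zero zero_less_one)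
  obtain n where n: "((1::real)/2) ^ n < \<delta>" using half_pow[OF dp] by blast
  define y where "y = (\<lambda>g. if wnorm g \<le> n then Iota else S0)"
  have "cdist x y \<le> (1/2) ^ Suc n" using xI by (intro cdist_le) (simp add: y_def)
  also have "\<dots> \<le> (1/2) ^ n" by (intro power_decreasing) auto
  finally have c1: "cdist x y \<le> \<delta>" using n by simp
  define e where "e = Abs_fg []"
  have we: "wnorm e = 0" unfolding e_def wnorm_def by simp
  have "(CA ^^ Suc n) y e = S0" unfolding y_def erosion using we by simp
  moreover have "(CA ^^ Suc n) x e = Iota"
  proof -
    have "(CA ^^ Suc n) x = x" by (rule iter_Iota[OF xI])
    then show ?thesis using xI by simp
  qed
  ultimately have "(CA ^^ Suc n) x e \<noteq> (CA ^^ Suc n) y e" by simp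
  then have "(1/2) ^ wnorm e \<le> cdist ((CA ^^ Suc n) x) ((CA ^^ Suc n) y)" by (rule cdist_ge)
  then have "1 \<le> cdist ((CA ^^ Suc n) x) ((CA ^^ Suc n) y)" using we by simp
  moreover have "cdist ((CA ^^ Suc n) x) ((CA ^^ Suc n) y) \<le> 1/2" using H c1 by blast
  ultimately show False by linarith
qed

lemma case_bit:
  assumes g0b: "isbit (CA x g0)"
  shows "\<not> equicont_point CA x"
proof
  assume "equicont_point CA x"
  define N0 where "N0 = wnorm g0"
  have epos: "(0::real) < (1/2) ^ Suc N0" by simp
  then obtain \<delta> where dp: "\<delta> > 0" and HH: "\<forall>t y. cdist x y \<le> \<delta> \<longrightarrow> cdist ((CA ^^ t) x) ((CA ^^ t) y) \<le> (1/2) ^ Suc N0"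
    using \<open>equicont_point CA x\<close> unfolding equicont_point_def by blast
  obtain n0 where n0: "((1::real)/2) ^ n0 < \<delta>" using half_pow[OF dp] by blast
  define n where "n = n0 + N0 + 2"
  have "((1::real)/2) ^ Suc n \<le> (1/2) ^ n0" unfolding n_def by (intro power_decreasing) auto
  then have nd: "((1::real)/2) ^ Suc n \<le> \<delta>" using n0 by simp
  define y1 where "y1 = (\<lambda>g. if wnorm g \<le> n then x g else S0)"
  define c where "c t = (CA ^^ t) y1" for t
  have "CA y1 g0 = CA x g0" by (rule CA_local) (auto simp: y1_def n_def N0_def)
  then have g0b1: "isbit ((CA ^^ 1) y1 g0)" using g0b by simp
  define J where "J = 2 * n + 2"
  obtain s where s: "length s = J" "reduced (Rep_fg g0 @ s)"
    "\<forall>j\<le>J. isbit ((CA ^^ (1 + j)) y1 (Abs_fg (Rep_fg g0 @ take j s)))"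
    using ray[OF g0b1] by blast
  define H where "H = Rep_fg g0 @ s"
  define h where "h = Abs_fg H"
  have redH: "reduced H" using s(2) H_def by simp
  have Rh: "Rep_fg h = H" using redH h_def by simp
  define M where "M = length H"
  have M: "M = N0 + J" unfolding M_def H_def N0_def wnorm_def using s(1) by simp
  have wh: "wnorm h = M" unfolding wnorm_def Rh M_def ..
  define y2 where "y2 = y1(h := S1)"
  define c' where "c' t = (CA ^^ t) y2" for t
  have y1h: "y1 h = S0" unfolding y1_def wh M J_def by simp
  have outside: "isbit (c t g)" if "n < wnorm g" for t g
    using bit_persist[of 0 y1 g t] that unfolding c_def by (simp add: y1_def)
  have sp0: "samepat y1 y2" unfolding samepat_def y2_def using y1h by auto
  have sp: "samepat (c t) (c' t)" for t unfolding c_def c'_def by (rule samepat_iter[OF sp0])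
  have support: "c t v \<noteq> c' t v \<longrightarrow> ldist (Rep_fg v) H \<le> t" for t v
  proof (induction t arbitrary: v)
    case 0
    show ?case
    proof
      assume "c 0 v \<noteq> c' 0 v"
      then have "v = h" unfolding c_def c'_def y2_def by (auto split: if_splits)
      then show "ldist (Rep_fg v) H \<le> 0" using Rh ldist_self by simp
    qed
  next
    case (Suc t)
    show ?case
    proof (rule ccontr)
      assume A: "\<not> (c (Suc t) v \<noteq> c' (Suc t) v \<longrightarrow> ldist (Rep_fg v) H \<le> Suc t)"
      then have d: "c (Suc t) v \<noteq> c' (Suc t) v" and far: "Suc t < ldist (Rep_fg v) H" by auto
      have ag: "c t w = c' t w" if "w \<in> insert v (nbhd v)" for w
      proof -
        have "t < ldist (Rep_fg w) H"
          using that far ldist_nbhd[of w v H] by auto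
        then show ?thesis using Suc[of w] by auto
      qed
      have "CA (c t) v = CA (c' t) v"
        by (rule CA_cong) (use ag samepat_bit[OF sp[of t]] in auto)
      then show False using d unfolding c_def c'_def by simp
    qed
  qed
  have front: "k \<le> J \<longrightarrow> c k (Abs_fg (take (M - k) H)) \<noteq> c' k (Abs_fg (take (M - k) H))" for k
  proof (induction k)
    case 0
    show ?case using y1h unfolding c_def c'_def y2_def M_def h_def by simp
  next
    case (Suc k)
    show ?case
    proof
      assume kJ: "Suc k \<le> J"
      define i where "i = M - Suc k"
      have iM: "i < M" "M - k = Suc i" "N0 \<le> i" using kJ M unfolding i_def by auto
      define g where "g = Abs_fg (take i H)"
      have Rg: "Rep_fg g = take i H" unfolding g_def using redH reduced_take by simp
      define vs where "vs = Abs_fg (take (Suc i) H)"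
      have vsg: "vs = gmul g (H ! i)" unfolding vs_def g_def
        using take_Suc_gmul[OF redH] iM M_def by simp
      have vsn: "vs \<in> nbhd g" unfolding vsg in_nbhd by blast
      have dvs: "c k vs \<noteq> c' k vs" using Suc kJ iM(2) unfolding vs_def by simp
      have gb: "isbit (c k g)"
      proof (cases "n < i")
        case True
        have "wnorm g = i" using Rg iM M_def by (simp add: wnorm_def)
        then show ?thesis using outside[of g k] True by simp
      next
        case False
        define j where "j = i - N0"
        have ti: "take i H = Rep_fg g0 @ take j s" unfolding H_def j_def N0_def wnorm_def
          using iM(3) N0_def wnorm_def by simp
        have jJ: "j \<le> J" using iM M unfolding j_def by simp
        have b: "isbit ((CA ^^ (1 + j)) y1 g)" using s(3) jJ unfolding g_def ti by simp
        have "1 + j \<le> k" using False iM M unfolding j_def i_def J_def by simp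
        then show ?thesis using bit_persist[OF b] unfolding c_def by simp
      qed
      have ldg: "ldist (Rep_fg g) H = Suc k" unfolding Rg using iM M_def ldist_take[of i H] i_def kJ M
        by simp
      have eqg: "c k g = c' k g" using support[of k g] ldg by auto
      have oth: "\<forall>v\<in>nbhd g. v \<noteq> vs \<longrightarrow> c k v = c' k v"
      proof (intro ballI impI)
        fix v assume "v \<in> nbhd g" "v \<noteq> vs"
        then have "length H - i \<le> ldist (Rep_fg v) H"
          using ldist_front[OF redH _ Rg] iM M_def vs_def by auto
        then have "Suc k \<le> ldist (Rep_fg v) H" using i_def M_def kJ M by simp
        then show "c k v = c' k v" using support[of k v] by auto
      qed
      have "CA (c k) g \<noteq> CA (c' k) g" by (rule frontier[OF sp gb eqg vsn dvs oth])
      then show "c (Suc k) (Abs_fg (take (M - Suc k) H)) \<noteq> c' (Suc k) (Abs_fg (take (M - Suc k) H))"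
        unfolding c_def c'_def g_def i_def by simp
    qed
  qed
  have "M - J = N0" using M by simp
  moreover have "Abs_fg (take N0 H) = g0" unfolding H_def N0_def wnorm_def by (simp add: Rep_fg_inverse)
  ultimately have dJ: "c J g0 \<noteq> c' J g0" using front[of J] by simp
  have a1: "cdist x y1 \<le> \<delta>" using cdist_le[of n x y1] nd unfolding y1_def by auto
  have a2: "cdist x y2 \<le> \<delta>"
  proof -
    have "\<forall>g. wnorm g \<le> n \<longrightarrow> x g = y2 g" unfolding y2_def y1_def using wh M J_def by auto
    then have "cdist x y2 \<le> (1/2) ^ Suc n" by (rule cdist_le)
    then show ?thesis using nd by linarith
  qed
  have "(CA ^^ J) x g0 \<noteq> (CA ^^ J) y1 g0 \<or> (CA ^^ J) x g0 \<noteq> (CA ^^ J) y2 g0"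
    using dJ unfolding c_def c'_def by auto
  then obtain yy where yy: "cdist x yy \<le> \<delta>" "(CA ^^ J) x g0 \<noteq> (CA ^^ J) yy g0"
    using a1 a2 by blast
  have "(1/2) ^ N0 \<le> cdist ((CA ^^ J) x) ((CA ^^ J) yy)" unfolding N0_def by (rule cdist_ge[of "(CA ^^ J) x" g0 "(CA ^^ J) yy", OF yy(2)])
  moreover have "cdist ((CA ^^ J) x) ((CA ^^ J) yy) \<le> (1/2) ^ Suc N0" using HH yy(1) by blast
  moreover have "((1::real)/2) ^ Suc N0 < (1/2) ^ N0" by simp
  ultimately show False by linarith
qed

theorem lemma8:
  shows "\<not> (\<exists>x. equicont_point CA x)"
proof
  assume "\<exists>x. equicont_point CA x"
  then obtain x where ec: "equicont_point CA x" by blast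
  show False
  proof (cases "\<exists>g0. isbit (CA x g0)")
    case True
    then show False using case_bit ec by blast
  next
    case False
    then show False using case_iota[OF all_Iota] ec by blast
  qed
qed
end
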